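(* Let $\Theta$ be a finite set of states, $\pi$ a probability distribution on $\Theta$ (Alice's prior), $\Gamma\subset\Theta$ with $0<\pi(\Gamma)<1$, and $\widetilde\pi$ another probability distribution on $\Theta$ (Carroll's prior). Then Carroll is $\Gamma$-optimistic if and only if $\widetilde\pi$ is a $\Gamma$-strengthening of $\pi$.
   Context: A signaling structure on $\Theta$ is a finite set $S$ of signals with probabilities $\sigma(s\mid\theta)\ge0$, $\sum_{s\in S}\sigma(s\mid\theta)=1$ for each $\theta$. For a prior $\rho$ on $\Theta$, $\mathbb{P}_{\rho,\sigma}$ is the probability on $\Theta\times S$ given by $\mathbb{P}_{\rho,\sigma}(\theta,s)=\rho(\theta)\sigma(s\mid\theta)$. Write $\mathbb{P}=\mathbb{P}_{\pi,\sigma}$ and $\widetilde{\mathbb{P}}=\mathbb{P}_{\widetilde\pi,\sigma}$. Alice's posterior of $\Gamma$ is $Q_\Gamma(s)=\mathbb{P}(\Gamma\mid s)$ (for $\mathbb{P}(s)>0$). $(Q_\Gamma,\widetilde{\mathbb{P}})$ denotes the random variable taking value $Q_\Gamma(s)$ with probability $\widetilde{\mathbb{P}}(s)$, and $(Q_\Gamma,\mathbb{P})$ the one taking value $Q_\Gamma(s)$ with probability $\mathbb{P}(s)$. $X\ge_{\mathrm{lr}}Y$ (likelihood ratio order) means $\mathbb{P}(X=v)/\mathbb{P}(Y=v)$ is weakly increasing in $v$ (equivalently $\mathbb{P}(X=u)\mathbb{P}(Y=v)\le\mathbb{P}(X=v)\mathbb{P}(Y=u)$ for $u<v$). Carroll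 is $\Gamma$-optimistic if $(Q_\Gamma,\widetilde{\mathbb{P}})\ge_{\mathrm{lr}}(Q_\Gamma,\mathbb{P})$ for every signaling structure $(S,\sigma)$ on $\Theta$. $\widetilde\pi$ is a $\Gamma$-strengthening of $\pi$ if $\widetilde\pi=a\pi^\Gamma+(1-a)\pi$ for some $a\in[0,1]$, where $\pi^\Gamma(\theta)=\pi(\theta\mid\Gamma)$. *)

theory Defs
  imports Complex_Main
begin

text \<open>States: a finite type 'a (Theta = UNIV). Signals: a finite set S of natural numbers
  (every finite signal set is in bijection with such a set).\<close>

definition prob_dist :: "('a::finite \<Rightarrow> real) \<Rightarrow> bool" where
  "prob_dist \<rho> \<longleftrightarrow> (\<forall>\<theta>. 0 \<le> \<rho> \<theta>) \<and> (\<Sum>\<theta>\<in>UNIV. \<rho> \<theta>) = 1"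

definition signaling :: "nat set \<Rightarrow> (nat \<Rightarrow> 'a::finite \<Rightarrow> real) \<Rightarrow> bool" where
  "signaling S \<sigma> \<longleftrightarrow> finite S \<and> (\<forall>s\<in>S. \<forall>\<theta>. 0 \<le> \<sigma> s \<theta>)
     \<and> (\<forall>\<theta>. (\<Sum>s\<in>S. \<sigma> s \<theta>) = 1)"

definition sig_prob :: "('a::finite \<Rightarrow> real) \<Rightarrow> (nat \<Rightarrow> 'a \<Rightarrow> real) \<Rightarrow> nat \<Rightarrow> real" where
  "sig_prob \<rho> \<sigma> s = (\<Sum>\<theta>\<in>UNIV. \<rho> \<theta> * \<sigma> s \<theta>)"

text \<open>Alice's posterior of Gamma given s: P(Gamma | s) (meaningful when P(s) > 0).\<close>
definition posterior :: "('a::finite \<Rightarrow> real) \<Rightarrow> (nat \<Rightarrow> 'a \<Rightarrow> real) \<Rightarrow> 'a set \<Rightarrow> nat \<Rightarrow> real" where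
  "posterior \<pi> \<sigma> \<Gamma> s = (\<Sum>\<theta>\<in>\<Gamma>. \<pi> \<theta> * \<sigma> s \<theta>) / sig_prob \<pi> \<sigma> s"

text \<open>Probability that the random variable (Q_Gamma, P_{rho,sigma}) takes value v; Q_Gamma is
  defined on the signals with P_{pi,sigma}(s) > 0.\<close>
definition post_mass ::
  "('a::finite \<Rightarrow> real) \<Rightarrow> ('a \<Rightarrow> real) \<Rightarrow> nat set \<Rightarrow> (nat \<Rightarrow> 'a \<Rightarrow> real) \<Rightarrow> 'a set \<Rightarrow> real \<Rightarrow> real" where
  "post_mass \<pi> \<rho> S \<sigma> \<Gamma> v =
     (\<Sum>s\<in>{s\<in>S. 0 < sig_prob \<pi> \<sigma> s \<and> posterior \<pi> \<sigma> \<Gamma> s = v}. sig_prob \<rho> \<sigma> s)"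

text \<open>Likelihood ratio order X \<ge>lr Y for real random variables given by mass functions,
  in the cross-product form: P(X=u)P(Y=v) \<le> P(X=v)P(Y=u) for u < v.\<close>
definition lr_ge :: "(real \<Rightarrow> real) \<Rightarrow> (real \<Rightarrow> real) \<Rightarrow> bool" where
  "lr_ge pX pY \<longleftrightarrow> (\<forall>u v. u < v \<longrightarrow> pX u * pY v \<le> pX v * pY u)"

text \<open>Carroll (prior pit) is Gamma-optimistic relative to Alice (prior pi): for every signaling
  structure, the random variable (Q_Gamma, Ptilde) is well defined (every signal with positive
  Ptilde-probability has positive P-probability, so Q_Gamma is defined there) and
  (Q_Gamma, Ptilde) \<ge>lr (Q_Gamma, P).\<close>
definition optimistic :: "('a::finite \<Rightarrow> real) \<Rightarrow> ('a \<Rightarrow> real) \<Rightarrow> 'a set \<Rightarrow> bool" where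
  "optimistic \<pi> \<pi>t \<Gamma> \<longleftrightarrow>
     (\<forall>S \<sigma>. signaling S \<sigma> \<longrightarrow>
        (\<forall>s\<in>S. 0 < sig_prob \<pi>t \<sigma> s \<longrightarrow> 0 < sig_prob \<pi> \<sigma> s) \<and>
        lr_ge (post_mass \<pi> \<pi>t S \<sigma> \<Gamma>) (post_mass \<pi> \<pi> S \<sigma> \<Gamma>))"

definition cond_prior :: "('a::finite \<Rightarrow> real) \<Rightarrow> 'a set \<Rightarrow> 'a \<Rightarrow> real" where
  "cond_prior \<pi> \<Gamma> \<theta> = (if \<theta> \<in> \<Gamma> then \<pi> \<theta> / (\<Sum>x\<in>\<Gamma>. \<pi> x) else 0)"

definition strengthening :: "('a::finite \<Rightarrow> real) \<Rightarrow> ('a \<Rightarrow> real) \<Rightarrow> 'a set \<Rightarrow> bool" where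
  "strengthening \<pi> \<pi>t \<Gamma> \<longleftrightarrow>
     (\<exists>a::real. 0 \<le> a \<and> a \<le> 1 \<and> (\<forall>\<theta>. \<pi>t \<theta> = a * cond_prior \<pi> \<Gamma> \<theta> + (1 - a) * \<pi> \<theta>))"

end

theory Submission
  imports Defs
begin

lemma split_sum:
  fixes f :: "'a::finite \<Rightarrow> real"
  shows "(\<Sum>\<theta>\<in>UNIV. f \<theta>) = (\<Sum>\<theta>\<in>\<Gamma>. f \<theta>) + (\<Sum>\<theta>\<in>-\<Gamma>. f \<theta>)"
proof -
  have "UNIV = \<Gamma> \<union> -\<Gamma>" by auto
  then show ?thesis using sum.union_disjoint[of \<Gamma> "-\<Gamma>" f] by (metis Compl_disjoint finite)
qed

lemma pd_le1: assumes "prob_dist (\<rho>::'a::finite\<Rightarrow>real)" shows "\<rho> x \<le> 1"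
proof -
  have "\<rho> x = (\<Sum>\<theta>\<in>{x}. \<rho> \<theta>)" by simp
  also have "\<dots> \<le> (\<Sum>\<theta>\<in>UNIV. \<rho> \<theta>)"
    by (rule sum_mono2) (use assms in \<open>auto simp: prob_dist_def\<close>)
  finally show ?thesis using assms by (simp add: prob_dist_def)
qed

lemma step1:
  fixes \<pi> \<pi>t h :: "'a::finite \<Rightarrow> real" and \<Gamma> :: "'a set"
  assumes opt: "optimistic \<pi> \<pi>t \<Gamma>" and p1: "prob_dist \<pi>" and p2: "prob_dist \<pi>t"
    and h: "\<And>\<theta>. 0 \<le> h \<theta> \<and> h \<theta> \<le> 1"
    and A: "(\<Sum>\<theta>\<in>\<Gamma>. \<pi> \<theta>) * (\<Sum>\<theta>\<in>UNIV. \<pi> \<theta> * h \<theta>) < (\<Sum>\<theta>\<in>\<Gamma>. \<pi> \<theta> * h \<theta>)"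
    and F1: "(\<Sum>\<theta>\<in>UNIV. \<pi> \<theta> * h \<theta>) < 1"
  shows "(\<Sum>\<theta>\<in>UNIV. \<pi> \<theta> * h \<theta>) \<le> (\<Sum>\<theta>\<in>UNIV. \<pi>t \<theta> * h \<theta>)"
proof -
  define g where "g = (\<Sum>\<theta>\<in>\<Gamma>. \<pi> \<theta>)"
  define F where "F = (\<Sum>\<theta>\<in>UNIV. \<pi> \<theta> * h \<theta>)"
  define Ft where "Ft = (\<Sum>\<theta>\<in>UNIV. \<pi>t \<theta> * h \<theta>)"
  define a where "a = (\<Sum>\<theta>\<in>\<Gamma>. \<pi> \<theta> * h \<theta>)"
  define \<sigma> where "\<sigma> = (\<lambda>(s::nat) \<theta>. if s = 0 then h \<theta> else 1 - h \<theta>)"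
  have sig: "signaling {0,1} \<sigma>" unfolding signaling_def \<sigma>_def using h by auto
  have pnn: "\<And>\<theta>. 0 \<le> \<pi> \<theta>" using p1 by (simp add: prob_dist_def)
  have g0: "0 \<le> g" unfolding g_def by (simp add: pnn sum_nonneg)
  have F0: "0 \<le> F" unfolding F_def using h pnn by (simp add: sum_nonneg)
  have aF: "a \<le> F" unfolding a_def F_def
    by (rule sum_mono2) (use h pnn in auto)
  have A': "g * F < a" using A by (simp add: g_def F_def a_def)
  have Fpos: "0 < F" using A' g0 F0 aF by (smt (verit) mult_nonneg_nonneg)
  have sp0: "sig_prob \<rho> \<sigma> 0 = (\<Sum>\<theta>\<in>UNIV. \<rho> \<theta> * h \<theta>)" for \<rho>
    by (simp add: sig_prob_def \<sigma>_def)
  have sp1: "sig_prob \<rho> \<sigma> 1 = 1 - (\<Sum>\<theta>\<in>UNIV. \<rho> \<theta> * h \<theta>)" if "prob_dist \<rho>" for \<rho>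
    using that by (simp add: sig_prob_def \<sigma>_def prob_dist_def algebra_simps sum_subtractf)
  have q0: "posterior \<pi> \<sigma> \<Gamma> 0 = a / F"
    unfolding posterior_def sp0 a_def F_def by (simp add: \<sigma>_def)
  have q1: "posterior \<pi> \<sigma> \<Gamma> 1 = (g - a) / (1 - F)"
    unfolding posterior_def sp1[OF p1] a_def F_def g_def by (simp add: \<sigma>_def algebra_simps sum_subtractf)
  have F1': "F < 1" using F1 F_def by simp
  have lt: "(g - a) / (1 - F) < a / F"
    using A' Fpos F1' by (simp add: divide_simps algebra_simps)
  have P0: "sig_prob \<pi> \<sigma> 0 = F" and P1: "sig_prob \<pi> \<sigma> 1 = 1 - F"
    using sp0 sp1[OF p1] F_def by auto
  have set0: "{s\<in>{0,1}. 0 < sig_prob \<pi> \<sigma> s \<and> posterior \<pi> \<sigma> \<Gamma> s = a / F} = {0::nat}"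
    using P0 P1 q0 q1 lt Fpos F1' by auto
  have set1: "{s\<in>{0,1}. 0 < sig_prob \<pi> \<sigma> s \<and> posterior \<pi> \<sigma> \<Gamma> s = (g - a) / (1 - F)} = {1::nat}"
    using P0 P1 q0 q1 lt Fpos F1' by auto
  have lr: "lr_ge (post_mass \<pi> \<pi>t {0,1} \<sigma> \<Gamma>) (post_mass \<pi> \<pi> {0,1} \<sigma> \<Gamma>)"
    using opt sig unfolding optimistic_def by blast
  then have "post_mass \<pi> \<pi>t {0,1} \<sigma> \<Gamma> ((g - a) / (1 - F)) * post_mass \<pi> \<pi> {0,1} \<sigma> \<Gamma> (a / F)
     \<le> post_mass \<pi> \<pi>t {0,1} \<sigma> \<Gamma> (a / F) * post_mass \<pi> \<pi> {0,1} \<sigma> \<Gamma> ((g - a) / (1 - F))"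
    using lt unfolding lr_ge_def by blast
  then have "(1 - Ft) * F \<le> Ft * (1 - F)"
    unfolding post_mass_def set0 set1 using sp0 sp1[OF p2] sp1[OF p1] by (simp add: F_def Ft_def)
  then show ?thesis by (simp add: F_def Ft_def algebra_simps)
qed

lemma ind_sum:
  fixes \<rho> :: "'a::finite \<Rightarrow> real"
  shows "(\<Sum>\<theta>\<in>B. \<rho> \<theta> * (if \<theta> \<in> C then c else 0)) = c * (\<Sum>\<theta>\<in>B \<inter> C. \<rho> \<theta>)"
proof -
  have "(\<Sum>\<theta>\<in>B. \<rho> \<theta> * (if \<theta> \<in> C then c else 0)) = (\<Sum>\<theta>\<in>B. if \<theta> \<in> C then c * \<rho> \<theta> else 0)"
    by (rule sum.cong) auto
  also have "\<dots> = (\<Sum>\<theta>\<in>B \<inter> C. c * \<rho> \<theta>)" by (simp add: sum.inter_restrict)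
  also have "\<dots> = c * (\<Sum>\<theta>\<in>B \<inter> C. \<rho> \<theta>)" by (simp add: sum_distrib_left)
  finally show ?thesis .
qed

lemma stepK:
  fixes \<pi> \<pi>t f :: "'a::finite \<Rightarrow> real" and \<Gamma> :: "'a set"
  assumes opt: "optimistic \<pi> \<pi>t \<Gamma>" and p1: "prob_dist \<pi>" and p2: "prob_dist \<pi>t"
    and g0: "0 < (\<Sum>\<theta>\<in>\<Gamma>. \<pi> \<theta>)" and g1: "(\<Sum>\<theta>\<in>\<Gamma>. \<pi> \<theta>) < 1"
    and f0: "\<And>\<theta>. 0 \<le> f \<theta>"
    and A: "(\<Sum>\<theta>\<in>\<Gamma>. \<pi> \<theta>) * (\<Sum>\<theta>\<in>UNIV. \<pi> \<theta> * f \<theta>) \<le> (\<Sum>\<theta>\<in>\<Gamma>. \<pi> \<theta> * f \<theta>)"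
  shows "(\<Sum>\<theta>\<in>UNIV. \<pi> \<theta> * f \<theta>) \<le> (\<Sum>\<theta>\<in>UNIV. \<pi>t \<theta> * f \<theta>)"
proof (rule field_le_epsilon)
  fix e :: real assume e: "0 < e"
  define g where "g = (\<Sum>\<theta>\<in>\<Gamma>. \<pi> \<theta>)"
  define Gt where "Gt = (\<Sum>\<theta>\<in>\<Gamma>. \<pi>t \<theta>)"
  have pnn: "\<And>\<theta>. 0 \<le> \<pi> \<theta>" using p1 by (simp add: prob_dist_def)
  have ptnn: "\<And>\<theta>. 0 \<le> \<pi>t \<theta>" using p2 by (simp add: prob_dist_def)
  have Gt0: "0 \<le> Gt" unfolding Gt_def by (simp add: ptnn sum_nonneg)
  have Gt1: "Gt \<le> 1"
  proof -
    have "(\<Sum>\<theta>\<in>UNIV. \<pi>t \<theta>) = Gt + (\<Sum>\<theta>\<in>-\<Gamma>. \<pi>t \<theta>)" unfolding Gt_def by (rule split_sum)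
    moreover have "0 \<le> (\<Sum>\<theta>\<in>-\<Gamma>. \<pi>t \<theta>)" by (simp add: ptnn sum_nonneg)
    ultimately show ?thesis using p2 by (simp add: prob_dist_def)
  qed
  define f' where "f' = (\<lambda>\<theta>. f \<theta> + (if \<theta> \<in> \<Gamma> then e else 0))"
  have f'0: "0 \<le> f' \<theta>" for \<theta> unfolding f'_def using f0[of \<theta>] e by auto
  have sf': "(\<Sum>\<theta>\<in>B. \<rho> \<theta> * f' \<theta>) = (\<Sum>\<theta>\<in>B. \<rho> \<theta> * f \<theta>) + e * (\<Sum>\<theta>\<in>B \<inter> \<Gamma>. \<rho> \<theta>)"
    for B and \<rho> :: "'a \<Rightarrow> real"
    unfolding f'_def by (simp add: distrib_left sum.distrib ind_sum)
  define M where "M = (\<Sum>\<theta>\<in>UNIV. f' \<theta>) + 1"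
  have Mpos: "0 < M" unfolding M_def using f'0 by (smt (verit) sum_nonneg)
  define h where "h = (\<lambda>\<theta>. f' \<theta> / (2 * M))"
  have fle: "f' \<theta> \<le> (\<Sum>\<theta>\<in>UNIV. f' \<theta>)" for \<theta>
  proof -
    have "f' \<theta> = (\<Sum>x\<in>{\<theta>}. f' x)" by simp
    also have "\<dots> \<le> (\<Sum>\<theta>\<in>UNIV. f' \<theta>)" by (rule sum_mono2) (use f'0 in auto)
    finally show ?thesis .
  qed
  have h01: "0 \<le> h \<theta> \<and> h \<theta> \<le> 1" for \<theta>
    using f'0[of \<theta>] fle[of \<theta>] Mpos unfolding h_def M_def by (auto simp: divide_simps)
  have hs: "(\<Sum>\<theta>\<in>B. \<rho> \<theta> * h \<theta>) = (\<Sum>\<theta>\<in>B. \<rho> \<theta> * f' \<theta>) / (2 * M)" for B and \<rho> :: "'a \<Rightarrow> real"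
    unfolding h_def by (simp add: sum_divide_distrib)
  have "(\<Sum>\<theta>\<in>UNIV. \<pi> \<theta> * f' \<theta>) \<le> (\<Sum>\<theta>\<in>UNIV. f' \<theta>)"
    by (rule sum_mono) (use pd_le1[OF p1] f'0 in \<open>metis mult_left_le_one_le pnn mult.commute\<close>)
  then have F1: "(\<Sum>\<theta>\<in>UNIV. \<pi> \<theta> * h \<theta>) < 1"
    unfolding hs using Mpos by (simp add: M_def divide_simps)
  have "g * (\<Sum>\<theta>\<in>UNIV. \<pi> \<theta> * f' \<theta>) < (\<Sum>\<theta>\<in>\<Gamma>. \<pi> \<theta> * f' \<theta>)"
  proof -
    have "g * g < g" using g0 g1 g_def by (simp add: mult_less_cancel_left1)
    then have "e * (g * g) < e * g" using e by simp
    then show ?thesis unfolding sf' using A g_def by (simp add: algebra_simps)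
  qed
  then have "g * (\<Sum>\<theta>\<in>UNIV. \<pi> \<theta> * h \<theta>) < (\<Sum>\<theta>\<in>\<Gamma>. \<pi> \<theta> * h \<theta>)"
    unfolding hs using Mpos by (simp add: divide_simps)
  from step1[OF opt p1 p2 h01 this[unfolded g_def] F1]
  have "(\<Sum>\<theta>\<in>UNIV. \<pi> \<theta> * f' \<theta>) \<le> (\<Sum>\<theta>\<in>UNIV. \<pi>t \<theta> * f' \<theta>)"
    unfolding hs using Mpos by (simp add: divide_simps)
  then have "(\<Sum>\<theta>\<in>UNIV. \<pi> \<theta> * f \<theta>) + e * g \<le> (\<Sum>\<theta>\<in>UNIV. \<pi>t \<theta> * f \<theta>) + e * Gt"
    unfolding sf' g_def Gt_def by simp
  moreover have "e * Gt \<le> e" using Gt1 e by simp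
  moreover have "0 \<le> e * g" using e g0 g_def by simp
  ultimately show "(\<Sum>\<theta>\<in>UNIV. \<pi> \<theta> * f \<theta>) \<le> (\<Sum>\<theta>\<in>UNIV. \<pi>t \<theta> * f \<theta>) + e" by linarith
qed

lemma dir1:
  fixes \<pi> \<pi>t :: "'a::finite \<Rightarrow> real" and \<Gamma> :: "'a set"
  assumes opt: "optimistic \<pi> \<pi>t \<Gamma>" and p1: "prob_dist \<pi>" and p2: "prob_dist \<pi>t"
    and g0: "0 < (\<Sum>\<theta>\<in>\<Gamma>. \<pi> \<theta>)" and g1: "(\<Sum>\<theta>\<in>\<Gamma>. \<pi> \<theta>) < 1"
  shows "strengthening \<pi> \<pi>t \<Gamma>"
proof -
  define g where "g = (\<Sum>\<theta>\<in>\<Gamma>. \<pi> \<theta>)"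
  define Gt where "Gt = (\<Sum>\<theta>\<in>\<Gamma>. \<pi>t \<theta>)"
  have gpos: "0 < g" "g < 1" using g0 g1 g_def by auto
  note K = stepK[OF opt p1 p2 g0 g1, folded g_def]
  have pnn: "\<And>\<theta>. 0 \<le> \<pi> \<theta>" using p1 by (simp add: prob_dist_def)
  have ptnn: "\<And>\<theta>. 0 \<le> \<pi>t \<theta>" using p2 by (simp add: prob_dist_def)
  have cg: "(\<Sum>\<theta>\<in>-\<Gamma>. \<pi> \<theta>) = 1 - g"
    using split_sum[of \<pi> \<Gamma>] p1 by (simp add: prob_dist_def g_def)
  have cGt: "(\<Sum>\<theta>\<in>-\<Gamma>. \<pi>t \<theta>) = 1 - Gt"
    using split_sum[of \<pi>t \<Gamma>] p2 by (simp add: prob_dist_def Gt_def)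
  have Gt1: "Gt \<le> 1" using cGt by (metis diff_ge_0_iff_ge ptnn sum_nonneg)
  have gGt: "g \<le> Gt"
  proof -
    have "(\<Sum>\<theta>\<in>UNIV. \<pi> \<theta> * (if \<theta> \<in> \<Gamma> then 1 else 0)) \<le> (\<Sum>\<theta>\<in>UNIV. \<pi>t \<theta> * (if \<theta> \<in> \<Gamma> then 1 else 0))"
      by (rule K) (use g0 g1 in \<open>auto simp: ind_sum g_def mult_le_cancel_left1\<close>)
    then show ?thesis by (simp add: ind_sum g_def Gt_def)
  qed
  have inG: "Gt * \<pi> \<theta> \<le> g * \<pi>t \<theta>" if "\<theta> \<in> \<Gamma>" for \<theta>
  proof -
    define f where "f = (\<lambda>x. (if x \<in> {\<theta>} then g else 0) + (if x \<in> -\<Gamma> then \<pi> \<theta> else 0))"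
    have sf: "(\<Sum>x\<in>B. \<rho> x * f x) = g * (\<Sum>x\<in>B \<inter> {\<theta>}. \<rho> x) + \<pi> \<theta> * (\<Sum>x\<in>B \<inter> -\<Gamma>. \<rho> x)"
      for B and \<rho> :: "'a \<Rightarrow> real"
      unfolding f_def by (simp add: distrib_left sum.distrib ind_sum del: Compl_iff insert_iff)
    have e1: "UNIV \<inter> {\<theta>} = {\<theta>}" "\<Gamma> \<inter> {\<theta>} = {\<theta>}" "\<Gamma> \<inter> -\<Gamma> = {}" "UNIV \<inter> -\<Gamma> = -\<Gamma>"
      using that by auto
    have "(\<Sum>x\<in>UNIV. \<pi> x * f x) \<le> (\<Sum>x\<in>UNIV. \<pi>t x * f x)"
    proof (rule K)
      show "0 \<le> f x" for x using gpos pnn[of \<theta>] by (auto simp: f_def)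
      show "g * (\<Sum>x\<in>UNIV. \<pi> x * f x) \<le> (\<Sum>x\<in>\<Gamma>. \<pi> x * f x)"
        unfolding sf e1 cg by (simp add: algebra_simps)
    qed
    then show ?thesis unfolding sf e1 using cg cGt by (simp add: algebra_simps)
  qed
  have outG: "(1 - Gt) * \<pi> \<theta> \<le> (1 - g) * \<pi>t \<theta>" if "\<theta> \<notin> \<Gamma>" for \<theta>
  proof -
    define f where "f = (\<lambda>x. (if x \<in> {\<theta>} then 1 - g else 0) + (if x \<in> \<Gamma> then \<pi> \<theta> else 0))"
    have sf: "(\<Sum>x\<in>B. \<rho> x * f x) = (1 - g) * (\<Sum>x\<in>B \<inter> {\<theta>}. \<rho> x) + \<pi> \<theta> * (\<Sum>x\<in>B \<inter> \<Gamma>. \<rho> x)"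
      for B and \<rho> :: "'a \<Rightarrow> real"
      unfolding f_def by (simp add: distrib_left sum.distrib ind_sum del: insert_iff)
    have e1: "UNIV \<inter> {\<theta>} = {\<theta>}" "\<Gamma> \<inter> {\<theta>} = {}" "\<Gamma> \<inter> \<Gamma> = \<Gamma>" "UNIV \<inter> \<Gamma> = \<Gamma>"
      using that by auto
    have "(\<Sum>x\<in>UNIV. \<pi> x * f x) \<le> (\<Sum>x\<in>UNIV. \<pi>t x * f x)"
    proof (rule K)
      show "0 \<le> f x" for x using gpos pnn[of \<theta>] by (auto simp: f_def)
      show "g * (\<Sum>x\<in>UNIV. \<pi> x * f x) \<le> (\<Sum>x\<in>\<Gamma>. \<pi> x * f x)"
        unfolding sf e1 using cg by (simp add: g_def algebra_simps)
    qed
    then show ?thesis unfolding sf e1 using cg cGt by (simp add: g_def Gt_def algebra_simps)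
  qed
  have eqG: "\<forall>\<theta>\<in>\<Gamma>. g * \<pi>t \<theta> - Gt * \<pi> \<theta> = 0"
  proof -
    have "(\<Sum>\<theta>\<in>\<Gamma>. g * \<pi>t \<theta> - Gt * \<pi> \<theta>) = 0"
      by (simp add: sum_subtractf sum_distrib_left[symmetric] g_def Gt_def)
    then show ?thesis using inG by (subst (asm) sum_nonneg_eq_0_iff) auto
  qed
  have eqN: "\<forall>\<theta>\<in>-\<Gamma>. (1 - g) * \<pi>t \<theta> - (1 - Gt) * \<pi> \<theta> = 0"
  proof -
    have "(\<Sum>\<theta>\<in>-\<Gamma>. (1 - g) * \<pi>t \<theta> - (1 - Gt) * \<pi> \<theta>) = 0"
      by (simp add: sum_subtractf sum_distrib_left[symmetric] cg cGt)
    then show ?thesis using outG by (subst (asm) sum_nonneg_eq_0_iff) auto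
  qed
  define a where "a = (Gt - g) / (1 - g)"
  show ?thesis unfolding strengthening_def
  proof (intro exI[of _ a] conjI allI)
    show "0 \<le> a" using gGt gpos by (simp add: a_def)
    show "a \<le> 1" using Gt1 gpos by (simp add: a_def)
    fix \<theta>
    show "\<pi>t \<theta> = a * cond_prior \<pi> \<Gamma> \<theta> + (1 - a) * \<pi> \<theta>"
    proof (cases "\<theta> \<in> \<Gamma>")
      case True
      then have "\<pi>t \<theta> = Gt * \<pi> \<theta> / g" using eqG gpos by (simp add: field_simps)
      moreover have "a * (1 - g) = Gt - g" unfolding a_def using gpos by simp
      then have "a / g + (1 - a) = Gt / g" using gpos by (simp add: field_simps)
      then have "a * (\<pi> \<theta> / g) + (1 - a) * \<pi> \<theta> = Gt * \<pi> \<theta> / g"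
        by (metis (no_types, lifting) distrib_right times_divide_eq_left mult.commute)
      ultimately show ?thesis using True by (simp add: cond_prior_def g_def[symmetric])
    next
      case False
      then have "\<pi>t \<theta> = (1 - Gt) * \<pi> \<theta> / (1 - g)" using eqN gpos by (simp add: field_simps)
      then show ?thesis using False gpos
        by (simp add: cond_prior_def a_def field_simps)
    qed
  qed
qed

lemma dir2:
  fixes \<pi> \<pi>t :: "'a::finite \<Rightarrow> real" and \<Gamma> :: "'a set"
  assumes st: "strengthening \<pi> \<pi>t \<Gamma>" and p1: "prob_dist \<pi>"
    and g0: "0 < (\<Sum>\<theta>\<in>\<Gamma>. \<pi> \<theta>)"
  shows "optimistic \<pi> \<pi>t \<Gamma>"
proof -
  define g where "g = (\<Sum>\<theta>\<in>\<Gamma>. \<pi> \<theta>)"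
  obtain a where a0: "0 \<le> a" and a1: "a \<le> 1"
    and pt: "\<And>\<theta>. \<pi>t \<theta> = a * cond_prior \<pi> \<Gamma> \<theta> + (1 - a) * \<pi> \<theta>"
    using st unfolding strengthening_def by blast
  have pnn: "\<And>\<theta>. 0 \<le> \<pi> \<theta>" using p1 by (simp add: prob_dist_def)
  define cG where "cG = a / g + (1 - a)"
  define cN where "cN = 1 - a"
  have gpos: "0 < g" using g0 g_def by simp
  have cGN: "cN \<le> cG" using a0 gpos by (simp add: cG_def cN_def)
  have ptG: "\<pi>t \<theta> = cG * \<pi> \<theta>" if "\<theta> \<in> \<Gamma>" for \<theta>
    using that pt[of \<theta>] by (simp add: cond_prior_def cG_def g_def[symmetric] algebra_simps)
  have ptN: "\<pi>t \<theta> = cN * \<pi> \<theta>" if "\<theta> \<notin> \<Gamma>" for \<theta>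
    using that pt[of \<theta>] by (simp add: cond_prior_def cN_def)
  define A where "A = (\<lambda>(\<sigma>::nat \<Rightarrow> 'a \<Rightarrow> real) s. (\<Sum>\<theta>\<in>\<Gamma>. \<pi> \<theta> * \<sigma> s \<theta>))"
  define B where "B = (\<lambda>(\<sigma>::nat \<Rightarrow> 'a \<Rightarrow> real) s. (\<Sum>\<theta>\<in>-\<Gamma>. \<pi> \<theta> * \<sigma> s \<theta>))"
  have spP: "sig_prob \<pi> \<sigma> s = A \<sigma> s + B \<sigma> s" for \<sigma> :: "nat \<Rightarrow> 'a \<Rightarrow> real" and s
    unfolding sig_prob_def A_def B_def by (rule split_sum)
  have spT: "sig_prob \<pi>t \<sigma> s = cG * A \<sigma> s + cN * B \<sigma> s" for \<sigma> :: "nat \<Rightarrow> 'a \<Rightarrow> real" and s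
  proof -
    have "sig_prob \<pi>t \<sigma> s = (\<Sum>\<theta>\<in>\<Gamma>. \<pi>t \<theta> * \<sigma> s \<theta>) + (\<Sum>\<theta>\<in>-\<Gamma>. \<pi>t \<theta> * \<sigma> s \<theta>)"
      unfolding sig_prob_def by (rule split_sum)
    also have "(\<Sum>\<theta>\<in>\<Gamma>. \<pi>t \<theta> * \<sigma> s \<theta>) = (\<Sum>\<theta>\<in>\<Gamma>. cG * (\<pi> \<theta> * \<sigma> s \<theta>))"
      by (rule sum.cong) (auto simp: ptG)
    also have "(\<Sum>\<theta>\<in>-\<Gamma>. \<pi>t \<theta> * \<sigma> s \<theta>) = (\<Sum>\<theta>\<in>-\<Gamma>. cN * (\<pi> \<theta> * \<sigma> s \<theta>))"
      by (rule sum.cong) (auto simp: ptN)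
    finally show ?thesis by (simp add: A_def B_def sum_distrib_left)
  qed
  show ?thesis unfolding optimistic_def
  proof (intro allI impI conjI ballI)
    fix S and \<sigma> :: "nat \<Rightarrow> 'a \<Rightarrow> real" assume sig: "signaling S \<sigma>"
    have AB0: "0 \<le> A \<sigma> s" "0 \<le> B \<sigma> s" if "s \<in> S" for s
      using sig that pnn unfolding signaling_def A_def B_def by (auto intro!: sum_nonneg)
    show "0 < sig_prob \<pi> \<sigma> s" if "s \<in> S" "0 < sig_prob \<pi>t \<sigma> s" for s
    proof (rule ccontr)
      assume "\<not> 0 < sig_prob \<pi> \<sigma> s"
      then have "A \<sigma> s = 0" "B \<sigma> s = 0" using AB0[OF that(1)] spP[of \<sigma> s] by auto
      then show False using that(2) spT[of \<sigma> s] by simp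
    qed
    define hh where "hh = (\<lambda>v::real. cN + (cG - cN) * v)"
    have pm: "post_mass \<pi> \<pi>t S \<sigma> \<Gamma> v = hh v * post_mass \<pi> \<pi> S \<sigma> \<Gamma> v" for v
      unfolding post_mass_def sum_distrib_left
    proof (rule sum.cong)
      fix s assume "s \<in> {s \<in> S. 0 < sig_prob \<pi> \<sigma> s \<and> posterior \<pi> \<sigma> \<Gamma> s = v}"
      then have P: "0 < A \<sigma> s + B \<sigma> s" and q: "A \<sigma> s / (A \<sigma> s + B \<sigma> s) = v"
        using spP[of \<sigma> s] by (auto simp: posterior_def A_def)
      then have "A \<sigma> s = v * (A \<sigma> s + B \<sigma> s)" by (simp add: field_simps)
      then have "cG * A \<sigma> s + cN * B \<sigma> s = cN * (A \<sigma> s + B \<sigma> s) + (cG - cN) * (v * (A \<sigma> s + B \<sigma> s))"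
        by (smt (verit) right_diff_distrib left_diff_distrib distrib_left)
      then show "sig_prob \<pi>t \<sigma> s = hh v * sig_prob \<pi> \<sigma> s"
        unfolding spT spP hh_def by (simp add: algebra_simps)
    qed simp
    have pY0: "0 \<le> post_mass \<pi> \<pi> S \<sigma> \<Gamma> v" for v
      unfolding post_mass_def by (rule sum_nonneg) auto
    show "lr_ge (post_mass \<pi> \<pi>t S \<sigma> \<Gamma>) (post_mass \<pi> \<pi> S \<sigma> \<Gamma>)"
      unfolding lr_ge_def
    proof (intro allI impI)
      fix u v :: real assume uv: "u < v"
      have "hh u \<le> hh v" unfolding hh_def using cGN uv by (simp add: mult_left_mono)
      then have "hh u * (post_mass \<pi> \<pi> S \<sigma> \<Gamma> u * post_mass \<pi> \<pi> S \<sigma> \<Gamma> v)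
          \<le> hh v * (post_mass \<pi> \<pi> S \<sigma> \<Gamma> u * post_mass \<pi> \<pi> S \<sigma> \<Gamma> v)"
        by (rule mult_right_mono) (simp add: pY0)
      then show "post_mass \<pi> \<pi>t S \<sigma> \<Gamma> u * post_mass \<pi> \<pi> S \<sigma> \<Gamma> v
          \<le> post_mass \<pi> \<pi>t S \<sigma> \<Gamma> v * post_mass \<pi> \<pi> S \<sigma> \<Gamma> u"
        unfolding pm by (simp add: algebra_simps)
    qed
  qed
qed

theorem proposition3:
  fixes \<pi> \<pi>t :: "'a::finite \<Rightarrow> real" and \<Gamma> :: "'a set"
  assumes "prob_dist \<pi>" and "prob_dist \<pi>t"
    and "\<Gamma> \<subset> UNIV"
    and "0 < (\<Sum>\<theta>\<in>\<Gamma>. \<pi> \<theta>)" and "(\<Sum>\<theta>\<in>\<Gamma>. \<pi> \<theta>) < 1"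
  shows "optimistic \<pi> \<pi>t \<Gamma> \<longleftrightarrow> strengthening \<pi> \<pi>t \<Gamma>"
  using dir1[OF _ assms(1,2,4,5)] dir2[OF _ assms(1,4)] by blast

end
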